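(* Let $\triangle ABC$ have side lengths $a=|BC|>b=|CA|>c=|AB|$ and angles $\alpha=\angle A$, $\beta=\angle B$, $\gamma=\angle C$, and suppose $60^\circ\le\beta<80^\circ$, $60^\circ<\alpha<90^\circ$, and $\alpha+\beta/2<120^\circ$. For $x\in\{a,b,c\}$ let $W_x$ denote the largest area of an equilateral triangle contained in the closed triangle $\triangle ABC$ having one of its sides lying on side $x$. Then the maximum of $W_a,W_b,W_c$ is attained on the short side $c$, and the minimum is attained on the middle side $b$.
   Context: An equilateral triangle of largest area contained in $\triangle ABC$ with one side lying on a given side of $\triangle ABC$ is called the wedged equilateral triangle (WET) on that side; it need not have all three vertices on the boundary of $\triangle ABC$. The max (resp. min) WET is the one of largest (resp. smallest) area among the three sides. *)

theory Defs
  imports "HOL-Analysis.Analysis"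
begin

definition angle_at :: "real^2 \<Rightarrow> real^2 \<Rightarrow> real^2 \<Rightarrow> real" where
  "angle_at V P Q = arccos (((P - V) \<bullet> (Q - V)) / (norm (P - V) * norm (Q - V)))"

definition equilateral :: "real^2 \<Rightarrow> real^2 \<Rightarrow> real^2 \<Rightarrow> bool" where
  "equilateral P Q R \<longleftrightarrow> P \<noteq> Q \<and> dist P Q = dist Q R \<and> dist Q R = dist R P"

definition eq_area :: "real \<Rightarrow> real" where
  "eq_area s = sqrt 3 / 4 * s ^ 2"

definition WET_area :: "real^2 \<Rightarrow> real^2 \<Rightarrow> real^2 \<Rightarrow> real" where
  "WET_area X Y Z = Sup {eq_area (dist P Q) | P Q R.
      equilateral P Q R \<and> convex hull {P, Q, R} \<subseteq> convex hull {X, Y, Z}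
      \<and> closed_segment P Q \<subseteq> closed_segment X Y}"

end

theory Submission
  imports Defs
begin

lemma trig_core:
  fixes al be :: real
  assumes a1: "pi/3 < al" and a2: "al < pi/2" and b1: "pi/3 \<le> be" and b2: "be < 4*pi/9"
    and s: "al + be/2 < 2*pi/3"
  shows "sqrt 3 * cos (al+be) + sin (al+be) \<le> 0"
    and "sin (al+be) - sqrt 3 * cos (al+be) \<ge> 2 * sin al"
proof -
  have e: "sin ((al+be)+pi/3) = sin (al+be) * cos (pi/3) + cos (al+be) * sin (pi/3)" by (rule sin_add)
  have "sin ((al+be)+pi/3) \<le> 0" using assms pi_gt_zero by (intro sin_le_zero; linarith)
  thus "sqrt 3 * cos (al+be) + sin (al+be) \<le> 0"
    unfolding e sin_60 cos_60 by (simp add: algebra_simps)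
  have i1: "0 \<le> (be - pi/3)/2" "(be - pi/3)/2 \<le> pi" using assms pi_gt_zero by auto
  have i2: "-(pi/2) \<le> (al+be-pi/3+al)/2" "(al+be-pi/3+al)/2 \<le> pi/2" using assms pi_gt_zero by auto
  have s1: "0 \<le> sin ((be - pi/3)/2)" by (rule sin_ge_zero[OF i1])
  have s2: "0 \<le> cos ((al+be-pi/3+al)/2)" by (rule cos_ge_zero[OF i2])
  have "0 \<le> sin (al+be-pi/3) - sin al"
    unfolding sin_diff_sin using s1 s2 by (simp add: algebra_simps)
  moreover have "sin ((al+be)-pi/3) = sin (al+be) * cos (pi/3) - cos (al+be) * sin (pi/3)"
    by (rule sin_diff)
  ultimately show "sin (al+be) - sqrt 3 * cos (al+be) \<ge> 2 * sin al"
    unfolding sin_60 cos_60 by (simp add: algebra_simps)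
qed

lemma G1:
  fixes n D k :: real
  assumes "n > 0" "n^2 = D^2 + k^2" "D \<le> n/2"
  shows "sqrt 3 * D \<le> \<bar>k\<bar>"
proof (cases "D \<le> 0")
  case True
  hence "sqrt 3 * D \<le> 0" by (simp add: mult_nonneg_nonpos)
  thus ?thesis by (meson abs_ge_zero order_trans)
next
  case False
  have "(2*D)^2 \<le> n^2" by (rule power_mono) (use assms False in auto)
  hence "3 * D^2 \<le> k^2" using assms(2) by (simp add: power_mult_distrib)
  hence "(sqrt 3 * D)^2 \<le> \<bar>k\<bar>^2" by (simp add: power_mult_distrib)
  thus ?thesis by (rule power2_le_imp_le) simp
qed

lemma arccos_facts:
  fixes x n k :: real
  assumes n: "n > 0" and h: "n^2 = x^2 + k^2"
  shows "cos (arccos (x/n)) = x/n" "sin (arccos (x/n)) = \<bar>k\<bar>/n"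
    "0 \<le> arccos (x/n)" "arccos (x/n) \<le> pi"
proof -
  have "x^2 \<le> n^2" using h by simp
  hence "x^2 / n^2 \<le> 1" using n by (simp add: divide_le_eq)
  hence "(x/n)^2 \<le> 1" by (simp add: power_divide)
  hence "\<bar>x/n\<bar> \<le> 1" by (simp only: abs_square_le_1)
  hence b: "-1 \<le> x/n" "x/n \<le> 1" using abs_le_D1 abs_le_D2 by fastforce+
  show "cos (arccos (x/n)) = x/n" using b by simp
  show "0 \<le> arccos (x/n)" "arccos (x/n) \<le> pi" using arccos_bounded[OF b] by auto
  have "1 - (x/n)^2 = (n^2 - x^2)/n^2" using n by (simp add: field_simps power_divide)
  also have "\<dots> = (k/n)^2" using h by (simp add: power_divide)
  finally have "1 - (x/n)^2 = (k/n)^2" .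
  hence "sin (arccos (x/n)) = sqrt ((k/n)^2)" using sin_arccos[OF b] by simp
  thus "sin (arccos (x/n)) = \<bar>k\<bar>/n" using n by simp
qed

lemma main_real:
  fixes a b c uu ww uw k :: real
  assumes pa: "a > 0" and pb: "b > 0" and pc: "c > 0"
    and sa: "a^2 = uu" and sb: "b^2 = ww" and sc: "c^2 = uu + ww - 2*uw"
    and lag: "uu*ww = uw^2 + k^2"
    and al1: "pi/3 < arccos ((ww-uw)/(c*b))" and al2: "arccos ((ww-uw)/(c*b)) < pi/2"
    and be1: "pi/3 \<le> arccos ((uu-uw)/(a*c))" and be2: "arccos ((uu-uw)/(a*c)) < 4*pi/9"
    and sm: "arccos ((ww-uw)/(c*b)) + arccos ((uu-uw)/(a*c)) / 2 < 2*pi/3"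
  shows "k \<noteq> 0" "sqrt 3 * (ww-uw) \<le> \<bar>k\<bar>" "sqrt 3 * (uu-uw) \<le> \<bar>k\<bar>"
    "\<bar>k\<bar> \<le> sqrt 3 * uw" "2*a*\<bar>k\<bar> \<le> c * (sqrt 3 * uw + \<bar>k\<bar>)"
proof -
  define al where "al = arccos ((ww-uw)/(c*b))"
  define be where "be = arccos ((uu-uw)/(a*c))"
  have hA: "(c*b)^2 = (ww-uw)^2 + k^2"
  proof -
    have "(c*b)^2 = (uu+ww-2*uw)*ww" by (simp add: power_mult_distrib sc sb)
    moreover have "(uu+ww-2*uw)*ww - ((ww-uw)^2 + k^2) = uu*ww - uw^2 - k^2" by (simp add: power2_eq_square algebra_simps)
    ultimately show ?thesis using lag by linarith
  qed
  have hB: "(a*c)^2 = (uu-uw)^2 + k^2"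
  proof -
    have "(a*c)^2 = uu*(uu+ww-2*uw)" by (simp add: power_mult_distrib sc sa)
    moreover have "uu*(uu+ww-2*uw) - ((uu-uw)^2 + k^2) = uu*ww - uw^2 - k^2" by (simp add: power2_eq_square algebra_simps)
    ultimately show ?thesis using lag by linarith
  qed
  have al1': "pi/3 < al" and al2': "al < pi/2" and be1': "pi/3 \<le> be" and be2': "be < 4*pi/9"
    and sm': "al + be/2 < 2*pi/3" using al1 al2 be1 be2 sm by (simp_all add: al_def be_def)
  have cb0: "c*b > 0" and ac0: "a*c > 0" using pa pb pc by auto
  note A = arccos_facts[OF cb0 hA, folded al_def]
  note B = arccos_facts[OF ac0 hB, folded be_def]
  have "0 < al" "al < pi" using al1' al2' pi_gt_zero by linarith+
  hence "0 < sin al" by (rule sin_gt_zero)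
  thus "k \<noteq> 0" using A(2) by auto
  have "cos al < cos (pi/3)" using al1' A(3,4) pi_gt_zero by (subst cos_mono_less_eq) auto
  hence "(ww-uw)/(c*b) < 1/2" using A(1) by (simp add: cos_60)
  hence "ww - uw \<le> (c*b)/2" using cb0 by (simp add: divide_less_eq)
  thus "sqrt 3 * (ww-uw) \<le> \<bar>k\<bar>" by (rule G1[OF cb0 hA])
  have "cos be \<le> cos (pi/3)" using be1' B(3,4) pi_gt_zero by (subst cos_mono_le_eq) auto
  hence "(uu-uw)/(a*c) \<le> 1/2" using B(1) by (simp add: cos_60)
  hence "uu - uw \<le> (a*c)/2" using ac0 by (simp add: divide_le_eq)
  thus "sqrt 3 * (uu-uw) \<le> \<bar>k\<bar>" by (rule G1[OF ac0 hB])
  have id1: "(ww-uw)*(uu-uw) - k^2 = - uw * c^2"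
  proof -
    have "(ww-uw)*(uu-uw) - k^2 - (- uw * (uu + ww - 2*uw)) = uu*ww - uw^2 - k^2" by (simp add: power2_eq_square algebra_simps)
    thus ?thesis using lag sc by simp
  qed
  have "cos (al+be) = ((ww-uw)*(uu-uw) - \<bar>k\<bar>^2) / (a*b*c^2)"
    unfolding cos_add A(1) B(1) A(2) B(2) using pa pb pc by (simp add: field_simps power2_eq_square)
  also have "\<dots> = - uw / (a*b)" unfolding power2_abs id1 using pa pb pc by (simp add: field_simps power2_eq_square)
  finally have cs: "cos (al+be) = - uw / (a*b)" .
  have "sin (al+be) = \<bar>k\<bar> * (uu + ww - 2*uw) / (a*b*c^2)"
    unfolding sin_add A(1) B(1) A(2) B(2) using pa pb pc by (simp add: field_simps power2_eq_square)
  also have "\<dots> = \<bar>k\<bar> / (a*b)" unfolding sc[symmetric] using pa pb pc by (simp add: field_simps power2_eq_square)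
  finally have sn: "sin (al+be) = \<bar>k\<bar> / (a*b)" .
  note T = trig_core[OF al1' al2' be1' be2' sm']
  have ab0: "a*b > 0" using pa pb by simp
  from T(1) have "\<bar>k\<bar> / (a*b) \<le> sqrt 3 * uw / (a*b)" unfolding cs sn by simp
  thus "\<bar>k\<bar> \<le> sqrt 3 * uw" using ab0 by (simp add: divide_le_cancel)
  from T(2) have "2 * (\<bar>k\<bar> / (c*b)) \<le> \<bar>k\<bar> / (a*b) + sqrt 3 * uw / (a*b)" unfolding cs sn A(2) by simp
  hence "2 * (\<bar>k\<bar> / (c*b)) * (a*b*c) \<le> (\<bar>k\<bar> / (a*b) + sqrt 3 * uw / (a*b)) * (a*b*c)"
    using pa pb pc by (intro mult_right_mono) auto
  moreover have "2 * (\<bar>k\<bar> / (c*b)) * (a*b*c) = 2*a*\<bar>k\<bar>" using pa pb pc by (simp add: field_simps)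
  moreover have "(\<bar>k\<bar> / (a*b) + sqrt 3 * uw / (a*b)) * (a*b*c) = c * (sqrt 3 * uw + \<bar>k\<bar>)"
    using pa pb pc by (simp add: field_simps)
  ultimately show "2*a*\<bar>k\<bar> \<le> c * (sqrt 3 * uw + \<bar>k\<bar>)" by simp
qed

definition cr :: "real^2 \<Rightarrow> real^2 \<Rightarrow> real" where "cr u v = u$1 * v$2 - u$2 * v$1"

lemma inner2: "u \<bullet> v = u$1 * v$1 + u$2 * v$2" for u v :: "real^2"
  by (simp add: inner_vec_def sum_2)

lemma lagrange: "(u\<bullet>u)*(v\<bullet>v) = (u\<bullet>v)^2 + (cr u v)^2"
  by (simp add: inner2 cr_def power2_eq_square algebra_simps)

lemma cr_lin: "cr u (a *\<^sub>R v + b *\<^sub>R w) = a * cr u v + b * cr u w"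
  by (simp add: cr_def algebra_simps)

lemma cr_self: "cr u u = 0" by (simp add: cr_def)
lemma cr_diff: "cr u (v - a *\<^sub>R u) = cr u v" by (simp add: cr_def algebra_simps)
lemma cr_anti: "cr v u = - cr u v" by (simp add: cr_def algebra_simps)

lemma ub_real:
  fixes p q be ga uu uw k :: real
  assumes "0 \<le> p" "p \<le> 1" "0 \<le> q" "q \<le> 1" "0 \<le> be" "0 \<le> ga" "uu > 0"
    and e1: "be * uu + ga * uw = (p+q)/2 * uu"
    and e2: "ga^2 * k^2 = 3/4 * (q-p)^2 * uu^2"
  shows "\<bar>q-p\<bar> * (sqrt 3 * uw + \<bar>k\<bar>) \<le> 2 * \<bar>k\<bar>"
proof -
  have "sqrt ((ga * \<bar>k\<bar>)^2) = sqrt ((sqrt 3 / 2 * \<bar>q-p\<bar> * uu)^2)"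
    using e2 by (simp add: power_mult_distrib power_divide)
  hence gk: "ga * \<bar>k\<bar> = sqrt 3 / 2 * \<bar>q-p\<bar> * uu"
    using assms by simp
  have "ga * uw \<le> (p+q)/2 * uu" using e1 assms by (smt (verit) mult_nonneg_nonneg)
  hence "\<bar>k\<bar> * (ga * uw) \<le> \<bar>k\<bar> * ((p+q)/2 * uu)" by (rule mult_left_mono) simp
  hence "sqrt 3 / 2 * \<bar>q-p\<bar> * uu * uw \<le> \<bar>k\<bar> * ((p+q)/2) * uu"
    using gk by (metis mult.assoc mult.commute)
  hence "uu * (sqrt 3 * \<bar>q-p\<bar> * uw) \<le> uu * (\<bar>k\<bar> * (p+q))"
    by (simp add: algebra_simps)
  hence h: "sqrt 3 * \<bar>q-p\<bar> * uw \<le> \<bar>k\<bar> * (p+q)" using \<open>uu > 0\<close> by simp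
  have "p + q \<le> 2 - \<bar>q-p\<bar>" using assms by linarith
  hence "\<bar>k\<bar> * (p+q) \<le> \<bar>k\<bar> * (2 - \<bar>q-p\<bar>)" by (rule mult_left_mono) simp
  thus ?thesis using h by (simp add: algebra_simps)
qed

lemma ub_vec:
  fixes X Y Z P Q R :: "real^2"
  assumes hP: "P \<in> closed_segment X Y" and hQ: "Q \<in> closed_segment X Y"
    and hR: "R \<in> convex hull {X,Y,Z}" and eq: "equilateral P Q R"
  shows "dist P Q * (sqrt 3 * ((Y-X) \<bullet> (Z-X)) + \<bar>cr (Y-X) (Z-X)\<bar>) \<le> 2 * \<bar>cr (Y-X) (Z-X)\<bar> * dist X Y"
proof -
  define u where "u = Y - X"
  define w where "w = Z - X"
  obtain p where p: "0 \<le> p" "p \<le> 1" "P = (1-p) *\<^sub>R X + p *\<^sub>R Y" using hP in_segment(1) by blast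
  obtain q where q: "0 \<le> q" "q \<le> 1" "Q = (1-q) *\<^sub>R X + q *\<^sub>R Y" using hQ in_segment(1) by blast
  obtain a1 be ga where r: "0 \<le> a1" "0 \<le> be" "0 \<le> ga" "a1 + be + ga = 1"
     "R = a1 *\<^sub>R X + be *\<^sub>R Y + ga *\<^sub>R Z" using hR unfolding convex_hull_3 by blast
  define v where "v = be *\<^sub>R u + ga *\<^sub>R w"
  have P': "P = X + p *\<^sub>R u" using p(3) by (simp add: u_def algebra_simps)
  have Q': "Q = X + q *\<^sub>R u" using q(3) by (simp add: u_def algebra_simps)
  have "R = (a1+be+ga) *\<^sub>R X + be *\<^sub>R (Y - X) + ga *\<^sub>R (Z-X)"
    unfolding r(5) by (simp add: algebra_simps)
  hence R': "R = X + v" using r(4) by (simp add: v_def u_def w_def)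
  have PQ: "P - Q = (p - q) *\<^sub>R u" using P' Q' by (simp add: algebra_simps)
  have RP: "R - P = v - p *\<^sub>R u" using P' R' by simp
  have RQ: "R - Q = v - q *\<^sub>R u" using Q' R' by simp
  have neq: "P \<noteq> Q" and d1: "dist P Q = dist Q R" and d2: "dist Q R = dist R P"
    using eq unfolding equilateral_def by auto
  have "u \<noteq> 0" using neq PQ by auto
  hence uu: "u \<bullet> u > 0" by simp
  have pq: "p \<noteq> q" using neq P' Q' by auto
  have dPQ: "dist P Q = \<bar>q - p\<bar> * norm u" using PQ by (simp add: dist_norm abs_minus_commute)
  have "(dist R Q)^2 = (dist R P)^2" using d2 by (simp add: dist_commute)
  hence "(v - q *\<^sub>R u) \<bullet> (v - q *\<^sub>R u) = (v - p *\<^sub>R u) \<bullet> (v - p *\<^sub>R u)"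
    using RP RQ by (simp add: dist_norm power2_norm_eq_inner norm_minus_commute)
  hence "v \<bullet> v - 2*q*(v \<bullet> u) + q^2 * (u \<bullet> u) = v \<bullet> v - 2*p*(v \<bullet> u) + p^2 * (u \<bullet> u)"
    by (simp add: inner_diff_left inner_diff_right inner_commute power2_eq_square algebra_simps)
  hence "2*(q-p)*(v \<bullet> u) = (q-p)*((p+q) * (u \<bullet> u))"
    by (simp add: power2_eq_square algebra_simps)
  hence "(q-p)*(2*(v \<bullet> u)) = (q-p)*((p+q) * (u \<bullet> u))" by (simp only: ac_simps)
  hence "2*(v \<bullet> u) = (p+q) * (u \<bullet> u)" using pq by simp
  hence vu: "v \<bullet> u = (p+q)/2 * (u \<bullet> u)" by simp
  have "(dist R P)^2 = (dist P Q)^2" using d1 d2 by simp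
  hence e2: "(v - p *\<^sub>R u) \<bullet> (v - p *\<^sub>R u) = (q-p)^2 * (u \<bullet> u)"
  proof -
    have "(P-Q) \<bullet> (P-Q) = (q-p)^2 * (u \<bullet> u)" unfolding PQ by (simp add: power2_eq_square algebra_simps)
    thus ?thesis using \<open>(dist R P)^2 = (dist P Q)^2\<close> RP by (simp add: dist_norm power2_norm_eq_inner)
  qed
  have "(u \<bullet> u) * ((v - p *\<^sub>R u) \<bullet> (v - p *\<^sub>R u)) = (u \<bullet> (v - p *\<^sub>R u))^2 + (cr u (v - p *\<^sub>R u))^2"
    by (rule lagrange)
  moreover have "u \<bullet> (v - p *\<^sub>R u) = (q-p)/2 * (u \<bullet> u)"
    using vu by (simp add: inner_diff_right inner_commute algebra_simps)
  moreover have "cr u (v - p *\<^sub>R u) = ga * cr u w"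
    by (simp add: cr_diff v_def cr_lin cr_self)
  ultimately have "(u \<bullet> u) * ((q-p)^2 * (u \<bullet> u)) = ((q-p)/2 * (u \<bullet> u))^2 + (ga * cr u w)^2"
    using e2 by simp
  hence e3: "ga^2 * (cr u w)^2 = 3/4 * (q-p)^2 * (u \<bullet> u)^2"
    by (simp add: power2_eq_square field_simps)
  have e1: "be * (u \<bullet> u) + ga * (u \<bullet> w) = (p+q)/2 * (u \<bullet> u)"
    using vu by (simp add: v_def inner_add_left inner_add_right inner_commute)
  have main: "\<bar>q-p\<bar> * (sqrt 3 * (u \<bullet> w) + \<bar>cr u w\<bar>) \<le> 2 * \<bar>cr u w\<bar>"
    by (rule ub_real[OF p(1,2) q(1,2) r(2,3) uu e1 e3])
  have "dist X Y = norm u" by (simp add: u_def dist_norm norm_minus_commute)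
  hence "dist P Q * (sqrt 3 * (u \<bullet> w) + \<bar>cr u w\<bar>) \<le> 2 * \<bar>cr u w\<bar> * dist X Y"
    using mult_right_mono[OF main norm_ge_zero[of u]] dPQ by (simp add: algebra_simps)
  thus ?thesis by (simp add: u_def w_def)
qed

lemma dist_le_seg:
  fixes X Y P Q :: "real^2"
  assumes hP: "P \<in> closed_segment X Y" and hQ: "Q \<in> closed_segment X Y"
  shows "dist P Q \<le> dist X Y"
proof -
  obtain p where p: "0 \<le> p" "p \<le> 1" "P = (1-p) *\<^sub>R X + p *\<^sub>R Y" using hP in_segment(1) by blast
  obtain q where q: "0 \<le> q" "q \<le> 1" "Q = (1-q) *\<^sub>R X + q *\<^sub>R Y" using hQ in_segment(1) by blast
  have "P - Q = (p - q) *\<^sub>R (Y - X)" unfolding p(3) q(3) by (simp add: algebra_simps)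
  hence "dist P Q = \<bar>p - q\<bar> * dist X Y" by (simp add: dist_norm norm_minus_commute)
  moreover have "\<bar>p - q\<bar> \<le> 1" using p q by linarith
  ultimately show ?thesis by (simp add: mult_left_le_one_le)
qed

lemma eq_real1:
  fixes h m mu uu uw ww k :: real
  assumes "uu > 0" "uu * ww = uw^2 + k^2" "m = mu * uw / uu"
  shows "(-h-m)^2 * uu + 2*(-h-m)*mu*uw + mu^2 * ww = h^2*uu + mu^2*k^2/uu"
    and "(h-m)^2 * uu + 2*(h-m)*mu*uw + mu^2 * ww = h^2*uu + mu^2*k^2/uu"
proof -
  have ww: "ww = (uw^2 + k^2)/uu" using assms by (simp add: field_simps)
  show "(-h-m)^2 * uu + 2*(-h-m)*mu*uw + mu^2 * ww = h^2*uu + mu^2*k^2/uu"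
    unfolding ww assms(3) using assms(1) by (simp add: field_simps power2_eq_square)
  show "(h-m)^2 * uu + 2*(h-m)*mu*uw + mu^2 * ww = h^2*uu + mu^2*k^2/uu"
    unfolding ww assms(3) using assms(1) by (simp add: field_simps power2_eq_square)
qed

lemma mu_sq:
  fixes p q uu k :: real
  assumes "uu > 0" "k \<noteq> 0"
  shows "(sqrt 3 / 2 * (q-p) * uu / \<bar>k\<bar>)^2 * k^2 / uu = 3/4 * (q-p)^2 * uu"
proof -
  have aux: "(c / \<bar>k\<bar>)^2 * k^2 / uu = c^2/uu" for c :: real
    using assms by (simp add: power_divide)
  have "(sqrt 3 / 2 * (q-p) * uu / \<bar>k\<bar>)^2 * k^2 / uu = (sqrt 3 / 2 * (q-p) * uu)^2 / uu"
    by (rule aux)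
  also have "\<dots> = 3/4 * (q-p)^2 * uu" using assms by (simp add: power_mult_distrib power2_eq_square field_simps)
  finally show ?thesis .
qed

definition WS :: "real^2 \<Rightarrow> real^2 \<Rightarrow> real^2 \<Rightarrow> real set" where
  "WS X Y Z = {eq_area (dist P Q) | P Q R.
      equilateral P Q R \<and> convex hull {P, Q, R} \<subseteq> convex hull {X, Y, Z}
      \<and> closed_segment P Q \<subseteq> closed_segment X Y}"

lemma WET_WS: "WET_area X Y Z = Sup (WS X Y Z)" by (simp add: WET_area_def WS_def)

lemma WS_comm: "WS X Y Z = WS Y X Z"
  unfolding WS_def by (simp add: insert_commute closed_segment_commute)

lemma eq_area_mono: "0 \<le> s \<Longrightarrow> s \<le> t \<Longrightarrow> eq_area s \<le> eq_area t"
  unfolding eq_area_def by (intro mult_left_mono power_mono) auto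

lemma WS_bdd: "bdd_above (WS X Y Z)"
  unfolding WS_def bdd_above_def
  by (rule exI[of _ "eq_area (dist X Y)"]) (auto intro!: eq_area_mono dist_le_seg simp: subset_closed_segment)

lemma WET_upper:
  fixes X Y Z :: "real^2"
  assumes pos: "sqrt 3 * ((Y-X) \<bullet> (Z-X)) + \<bar>cr (Y-X) (Z-X)\<bar> > 0"
    and ne: "x \<in> WS X Y Z"
  shows "WET_area X Y Z \<le> eq_area (2 * \<bar>cr (Y-X) (Z-X)\<bar> * dist X Y / (sqrt 3 * ((Y-X) \<bullet> (Z-X)) + \<bar>cr (Y-X) (Z-X)\<bar>))"
  unfolding WET_WS
proof (rule cSup_least)
  show "WS X Y Z \<noteq> {}" using ne by auto
  fix y assume "y \<in> WS X Y Z"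
  then obtain P Q R where y: "y = eq_area (dist P Q)" and e: "equilateral P Q R"
    and h: "convex hull {P, Q, R} \<subseteq> convex hull {X, Y, Z}" and s: "closed_segment P Q \<subseteq> closed_segment X Y"
    unfolding WS_def by blast
  have "R \<in> convex hull {X,Y,Z}" using h hull_inc[of R "{P,Q,R}"] by blast
  moreover have "P \<in> closed_segment X Y" "Q \<in> closed_segment X Y" using s subset_closed_segment by blast+
  ultimately have "dist P Q * (sqrt 3 * ((Y-X) \<bullet> (Z-X)) + \<bar>cr (Y-X) (Z-X)\<bar>) \<le> 2 * \<bar>cr (Y-X) (Z-X)\<bar> * dist X Y"
    using ub_vec e by blast
  hence "dist P Q \<le> 2 * \<bar>cr (Y-X) (Z-X)\<bar> * dist X Y / (sqrt 3 * ((Y-X) \<bullet> (Z-X)) + \<bar>cr (Y-X) (Z-X)\<bar>)"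
    using pos by (simp add: pos_le_divide_eq)
  thus "y \<le> eq_area (2 * \<bar>cr (Y-X) (Z-X)\<bar> * dist X Y / (sqrt 3 * ((Y-X) \<bullet> (Z-X)) + \<bar>cr (Y-X) (Z-X)\<bar>))"
    unfolding y by (intro eq_area_mono) auto
qed

lemma lb_vec:
  fixes X Y Z :: "real^2" and p q :: real
  defines "u \<equiv> Y - X" and "w \<equiv> Z - X"
  defines "mu \<equiv> sqrt 3 / 2 * (q-p) * (u \<bullet> u) / \<bar>cr u w\<bar>"
  defines "la \<equiv> (p+q)/2 - mu * (u \<bullet> w) / (u \<bullet> u)"
  assumes k: "cr u w \<noteq> 0" and pq: "0 \<le> p" "p < q" "q \<le> 1"
    and la0: "0 \<le> la" and la1: "la + mu \<le> 1"
  shows "eq_area ((q-p) * dist X Y) \<in> {eq_area (dist P Q) | P Q R.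
      equilateral P Q R \<and> convex hull {P, Q, R} \<subseteq> convex hull {X, Y, Z}
      \<and> closed_segment P Q \<subseteq> closed_segment X Y}"
proof -
  define P where "P = X + p *\<^sub>R u"
  define Q where "Q = X + q *\<^sub>R u"
  define R where "R = X + la *\<^sub>R u + mu *\<^sub>R w"
  have "u \<noteq> 0" using k by (auto simp: cr_def)
  hence uu: "u \<bullet> u > 0" by simp
  have mu0: "mu \<ge> 0" unfolding mu_def using pq uu by simp
  have segP: "P \<in> closed_segment X Y" unfolding in_segment(1) P_def u_def
    by (rule exI[of _ p]) (use pq in \<open>auto simp: algebra_simps\<close>)
  have segQ: "Q \<in> closed_segment X Y" unfolding in_segment(1) Q_def u_def
    by (rule exI[of _ q]) (use pq in \<open>auto simp: algebra_simps\<close>)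
  have hP: "P \<in> convex hull {X,Y,Z}" using segP segment_convex_hull hull_mono[of "{X,Y}" "{X,Y,Z}"] by blast
  have hQ: "Q \<in> convex hull {X,Y,Z}" using segQ segment_convex_hull hull_mono[of "{X,Y}" "{X,Y,Z}"] by blast
  have hR: "R \<in> convex hull {X,Y,Z}" unfolding convex_hull_3
    apply (rule CollectI, rule exI[of _ "1 - la - mu"], rule exI[of _ la], rule exI[of _ mu])
    using la0 la1 mu0 by (auto simp: R_def u_def w_def algebra_simps)
  have hull: "convex hull {P,Q,R} \<subseteq> convex hull {X,Y,Z}"
    by (rule convex_hull_subset) (use hP hQ hR in auto)
  have seg: "closed_segment P Q \<subseteq> closed_segment X Y"
    using segP segQ subset_closed_segment by blast
  have lag: "(u \<bullet> u) * (w \<bullet> w) = (u \<bullet> w)^2 + (cr u w)^2" by (rule lagrange)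
  define m where "m = mu * (u \<bullet> w) / (u \<bullet> u)"
  define h where "h = (q-p)/2"
  have laq: "la - q = -h - m" unfolding la_def m_def h_def by (simp add: field_simps)
  have lap: "la - p = h - m" unfolding la_def m_def h_def by (simp add: field_simps)
  have target: "h^2*(u \<bullet> u) + mu^2*(cr u w)^2/(u \<bullet> u) = (q-p)^2 * (u \<bullet> u)"
    unfolding mu_def h_def using mu_sq[OF uu k, of q p] by (simp add: power2_eq_square field_simps)
  have RQ: "R - Q = (la - q) *\<^sub>R u + mu *\<^sub>R w" by (simp add: R_def Q_def algebra_simps)
  have RP: "R - P = (la - p) *\<^sub>R u + mu *\<^sub>R w" by (simp add: R_def P_def algebra_simps)
  have ex: "(a *\<^sub>R u + mu *\<^sub>R w) \<bullet> (a *\<^sub>R u + mu *\<^sub>R w) = a^2 * (u \<bullet> u) + 2*a*mu*(u \<bullet> w) + mu^2 * (w \<bullet> w)" for a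
    by (simp add: inner_add_left inner_add_right inner_commute power2_eq_square algebra_simps)
  have n1: "(R - Q) \<bullet> (R - Q) = (q-p)^2 * (u \<bullet> u)"
    unfolding RQ ex laq eq_real1(1)[OF uu lag m_def] target ..
  have n2: "(R - P) \<bullet> (R - P) = (q-p)^2 * (u \<bullet> u)"
    unfolding RP ex lap eq_real1(2)[OF uu lag m_def] target ..
  have n3: "(Q - P) \<bullet> (Q - P) = (q-p)^2 * (u \<bullet> u)"
    by (simp add: P_def Q_def algebra_simps power2_eq_square)
  have "dist Q R = norm (R - Q)" by (simp add: dist_norm norm_minus_commute)
  hence dQR: "dist Q R = sqrt ((q-p)^2 * (u \<bullet> u))" using n1 by (simp add: norm_eq_sqrt_inner)
  have dRP: "dist R P = sqrt ((q-p)^2 * (u \<bullet> u))" using n2 by (simp add: dist_norm norm_eq_sqrt_inner)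
  have "dist P Q = norm (Q - P)" by (simp add: dist_norm norm_minus_commute)
  hence dPQ: "dist P Q = sqrt ((q-p)^2 * (u \<bullet> u))" using n3 by (simp add: norm_eq_sqrt_inner)
  have "P \<noteq> Q" using pq \<open>u \<noteq> 0\<close> by (simp add: P_def Q_def)
  hence equi: "equilateral P Q R" unfolding equilateral_def using dQR dRP dPQ by simp
  have "dist X Y = sqrt (u \<bullet> u)" by (simp add: dist_norm u_def norm_eq_sqrt_inner[symmetric] norm_minus_commute)
  hence "dist P Q = (q-p) * dist X Y" using dPQ pq
    by (simp add: real_sqrt_mult)
  thus ?thesis using equi hull seg by (intro CollectI exI[of _ P] exI[of _ Q] exI[of _ R]) simp
qed

lemma WET_lower:
  assumes "x \<in> WS X Y Z" shows "x \<le> WET_area X Y Z"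
  unfolding WET_WS using assms WS_bdd by (rule cSup_upper)

lemma aux_frac: "K \<noteq> 0 \<Longrightarrow> S \<noteq> 0 \<Longrightarrow> a / 2 * (2 * K / S) * U / K = a * U / (S::real)"
  by (simp add: field_simps)

lemma lb_small:
  fixes X Y Z :: "real^2"
  defines "u \<equiv> Y - X" and "w \<equiv> Z - X"
  assumes k: "cr u w \<noteq> 0" and c1: "sqrt 3 * (u \<bullet> w) \<ge> \<bar>cr u w\<bar>"
    and c2: "sqrt 3 * (u \<bullet> u - u \<bullet> w) \<le> \<bar>cr u w\<bar>"
  shows "eq_area (2 * \<bar>cr u w\<bar> * dist X Y / (sqrt 3 * (u \<bullet> w) + \<bar>cr u w\<bar>)) \<in> WS X Y Z"
proof -
  define K where "K = \<bar>cr u w\<bar>"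
  define D where "D = u \<bullet> w"
  define U where "U = u \<bullet> u"
  have K: "K > 0" using k by (simp add: K_def)
  have "u \<noteq> 0" using k by (auto simp: cr_def)
  hence U: "U > 0" by (simp add: U_def)
  have S: "sqrt 3 * D + K > 0" using K c1 by (simp add: K_def D_def)
  define p where "p = (sqrt 3 * D - K) / (sqrt 3 * D + K)"
  have p0: "0 \<le> p" unfolding p_def using c1 S by (simp add: K_def D_def)
  have p1: "p < 1" unfolding p_def using S K by (simp add: divide_less_eq)
  have qp: "1 - p = 2 * K / (sqrt 3 * D + K)" unfolding p_def using S by (simp add: field_simps)
  define mu where "mu = sqrt 3 / 2 * (1-p) * U / K"
  have mu: "mu = sqrt 3 * U / (sqrt 3 * D + K)"
  proof -
    have "mu = sqrt 3 / 2 * (2 * K / (sqrt 3 * D + K)) * U / K" unfolding mu_def qp ..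
    also have "\<dots> = sqrt 3 * U / (sqrt 3 * D + K)"
      using K S by (intro aux_frac) auto
    finally show ?thesis .
  qed
  have la1: "(p+1)/2 = sqrt 3 * D / (sqrt 3 * D + K)" unfolding p_def using S by (simp add: field_simps)
  have la2: "mu * D / U = sqrt 3 * D / (sqrt 3 * D + K)" unfolding mu using U by simp
  have la: "(p+1)/2 - mu * D / U = 0" unfolding la1 la2 by simp
  have "mu \<le> 1" unfolding mu using S c2 by (simp add: K_def D_def U_def algebra_simps)
  have m: "sqrt 3 / 2 * (1 - p) * (u \<bullet> u) / \<bar>cr u w\<bar> = mu" by (simp add: mu_def U_def K_def)
  have "eq_area ((1-p) * dist X Y) \<in> WS X Y Z"
    unfolding WS_def
    apply (rule lb_vec[where X=X and Y=Y and Z=Z and p=p and q=1, folded u_def w_def, unfolded m])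
    using k p0 p1 la \<open>mu \<le> 1\<close> by (simp_all add: D_def U_def)
  thus ?thesis unfolding qp by (simp add: K_def D_def)
qed

lemma lb_big:
  fixes X Y Z :: "real^2"
  defines "u \<equiv> Y - X" and "w \<equiv> Z - X"
  assumes k: "cr u w \<noteq> 0" and c1: "sqrt 3 * (u \<bullet> w) \<le> \<bar>cr u w\<bar>"
    and c2: "sqrt 3 * (u \<bullet> u - u \<bullet> w) \<le> \<bar>cr u w\<bar>"
  shows "eq_area (dist X Y) \<in> WS X Y Z"
proof -
  define K where "K = \<bar>cr u w\<bar>"
  define D where "D = u \<bullet> w"
  define U where "U = u \<bullet> u"
  have K: "K > 0" using k by (simp add: K_def)
  have "u \<noteq> 0" using k by (auto simp: cr_def)
  hence U: "U > 0" by (simp add: U_def)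
  define mu where "mu = sqrt 3 / 2 * (1-0) * U / K"
  have la: "(0+1)/2 - mu * D / U = 1/2 - sqrt 3 * D / (2*K)" unfolding mu_def using U K by (simp add: field_simps)
  have l0: "0 \<le> 1/2 - sqrt 3 * D / (2*K)" using c1 K by (simp add: K_def D_def field_simps)
  have l1: "1/2 - sqrt 3 * D / (2*K) + mu \<le> 1" unfolding mu_def using c2 K
    by (simp add: K_def D_def U_def field_simps)
  have m: "sqrt 3 / 2 * (1 - 0) * (u \<bullet> u) / \<bar>cr u w\<bar> = mu" by (simp add: mu_def U_def K_def)
  have "eq_area ((1-0) * dist X Y) \<in> WS X Y Z"
    unfolding WS_def
    apply (rule lb_vec[where X=X and Y=Y and Z=Z and p=0 and q=1, folded u_def w_def, unfolded m])
    using k la l0 l1 by (simp_all add: D_def U_def)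
  thus ?thesis by simp
qed


theorem mainTheorem2:
  fixes A B C :: "real^2"
  assumes noncol: "\<not> collinear {A, B, C}"
    and sides: "dist B C > dist C A" "dist C A > dist A B"
    and beta: "pi / 3 \<le> angle_at B C A" "angle_at B C A < 4 * pi / 9"
    and alpha: "pi / 3 < angle_at A B C" "angle_at A B C < pi / 2"
    and sum: "angle_at A B C + angle_at B C A / 2 < 2 * pi / 3"
  shows "WET_area A B C = Max {WET_area B C A, WET_area C A B, WET_area A B C}
       \<and> WET_area C A B = Min {WET_area B C A, WET_area C A B, WET_area A B C}"
proof -
  define u where "u = B - C"
  define w where "w = A - C"
  define k where "k = cr u w"
  define a where "a = dist B C"
  define b where "b = dist C A"
  define c where "c = dist A B"
  have na: "a = norm u" by (simp add: a_def u_def dist_norm)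
  have nb: "b = norm w" by (simp add: b_def w_def dist_norm norm_minus_commute)
  have nc: "c = norm (w - u)" by (simp add: c_def u_def w_def dist_norm)
  have "A \<noteq> B" using noncol by auto
  hence pc: "c > 0" by (simp add: c_def)
  have pb: "b > 0" using sides pc unfolding b_def c_def by linarith
  have pa: "a > 0" using sides pb unfolding b_def a_def by linarith
  have sa: "a^2 = u \<bullet> u" by (simp add: na power2_norm_eq_inner)
  have sb: "b^2 = w \<bullet> w" by (simp add: nb power2_norm_eq_inner)
  have sc: "c^2 = u \<bullet> u + w \<bullet> w - 2 * (u \<bullet> w)"
    by (simp add: nc power2_norm_eq_inner inner_diff_left inner_diff_right inner_commute)
  have lag: "(u \<bullet> u) * (w \<bullet> w) = (u \<bullet> w)^2 + k^2" unfolding k_def by (rule lagrange)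
  have BA: "B - A = u - w" and CA: "C - A = - w" and CB: "C - B = - u" and AB: "A - B = w - u"
    by (simp_all add: u_def w_def)
  have d1: "(u - w) \<bullet> (- w) = w \<bullet> w - u \<bullet> w" by (simp add: inner_diff_left inner_diff_right inner_commute)
  have n1: "norm (u - w) = c" "norm (- w) = b" by (simp_all add: nb nc norm_minus_commute)
  have angA: "angle_at A B C = arccos ((w \<bullet> w - u \<bullet> w) / (c * b))"
    unfolding angle_at_def BA CA d1 n1 ..
  have angB: "angle_at B C A = arccos ((u \<bullet> u - u \<bullet> w) / (a * c))"
    unfolding angle_at_def CB AB
    by (simp add: inner_diff_right na nc)
  note R = main_real[OF pa pb pc sa sb sc lag alpha[unfolded angA] beta[unfolded angB] sum[unfolded angA angB]]
  define S where "S = sqrt 3 * (u \<bullet> w) + \<bar>k\<bar>"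
  have kpos: "\<bar>k\<bar> > 0" using R(1) by simp
  have Spos: "S > 0" using R(4) kpos by (simp add: S_def)
  have ma: "eq_area (2 * \<bar>k\<bar> * a / S) \<in> WS C B A"
    using lb_small[where X=C and Y=B and Z=A, folded u_def w_def, folded k_def] R(1,2,3,4)
    by (simp add: S_def a_def dist_commute inner_commute)
  have WaL: "eq_area (2 * \<bar>k\<bar> * a / S) \<le> WET_area B C A"
    using WET_lower[OF ma] by (simp add: WET_WS WS_comm[of B C A])
  have dCB: "dist C B = a" by (simp add: a_def dist_commute)
  have eqa: "WET_area B C A = WET_area C B A" by (simp only: WET_WS WS_comm[of B C A])
  have WaU: "WET_area B C A \<le> eq_area (2 * \<bar>k\<bar> * a / S)"
    unfolding eqa using WET_upper[where X=C and Y=B and Z=A, folded u_def w_def, folded k_def, folded S_def, unfolded dCB, OF Spos ma] .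
  have crwu: "cr w u = - k" unfolding k_def by (rule cr_anti)
  have mb: "eq_area (2 * \<bar>k\<bar> * b / S) \<in> WS C A B"
  proof -
    have wu: "w \<bullet> u = u \<bullet> w" by (rule inner_commute)
    have "eq_area (2 * \<bar>- k\<bar> * dist C A / (sqrt 3 * (w \<bullet> u) + \<bar>- k\<bar>)) \<in> WS C A B"
      by (rule lb_small[where X=C and Y=A and Z=B, folded u_def w_def, unfolded crwu])
        (use R(1,2,3,4) in \<open>simp_all add: wu\<close>)
    thus ?thesis by (simp add: wu S_def b_def)
  qed
  have Spos': "sqrt 3 * (w \<bullet> u) + \<bar>- k\<bar> > 0" using Spos by (simp add: S_def inner_commute)
  have SS: "sqrt 3 * (w \<bullet> u) + \<bar>- k\<bar> = S" by (simp add: S_def inner_commute)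
  have WbU: "WET_area C A B \<le> eq_area (2 * \<bar>- k\<bar> * b / S)"
    using WET_upper[where X=C and Y=A and Z=B, folded u_def w_def b_def, unfolded crwu, OF Spos' mb]
    unfolding SS .
  have crc: "cr (u - w) (- w) = - k" by (simp add: k_def cr_def algebra_simps)
  have d2: "(u - w) \<bullet> (u - w) = u \<bullet> u + w \<bullet> w - 2 * (u \<bullet> w)"
    by (simp add: inner_diff_left inner_diff_right inner_commute)
  have mc: "eq_area c \<in> WS A B C"
    using lb_big[where X=A and Y=B and Z=C, unfolded BA CA crc d1 d2] R(1,2,3)
    by (simp add: c_def algebra_simps)
  have WcL: "eq_area c \<le> WET_area A B C" by (rule WET_lower[OF mc])
  have "2 * \<bar>k\<bar> * b / S \<le> 2 * \<bar>k\<bar> * a / S"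
    using sides Spos kpos by (simp add: a_def b_def divide_right_mono)
  hence c1: "eq_area (2 * \<bar>k\<bar> * b / S) \<le> eq_area (2 * \<bar>k\<bar> * a / S)"
    using Spos pb by (intro eq_area_mono) auto
  have "2 * \<bar>k\<bar> * a / S \<le> c" using R(5) Spos by (simp add: S_def pos_divide_le_eq algebra_simps)
  hence c2: "eq_area (2 * \<bar>k\<bar> * a / S) \<le> eq_area c"
    using Spos pa by (intro eq_area_mono) auto
  have i1: "WET_area C A B \<le> WET_area B C A" using WbU c1 WaL by simp
  have i2: "WET_area B C A \<le> WET_area A B C" using WaU c2 WcL by linarith
  show ?thesis using i1 i2 by (simp add: max_def min_def)
qed

end
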